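(* Let $G$ be a connected graph with at least three vertices and let $m \geq 1$ be an integer. Then $$\omega(G)+1 \leq \chi_\rho(FSSD_m(G)) \leq \chi_\rho(G)+1,$$ where $\omega(G)$ denotes the clique number of $G$.
   Context: All graphs are finite and simple. For a positive integer $i$, an $i$-packing in a graph $G$ is a set of vertices any two distinct members of which are at distance greater than $i$ in $G$. The packing chromatic number $\chi_\rho(G)$ is the smallest integer $k$ such that $V(G)$ can be partitioned into sets $V_1,\dots,V_k$ with each $V_i$ an $i$-packing; equivalently, the least $k$ admitting a map $c:V(G)\to\{1,\dots,k\}$ such that $c(u)=c(v)=i$ with $u\neq v$ implies $d_G(u,v)>i$. For a positive integer $m$, the finite super subdivision graph $FSSD_m(G)$ is obtained from $G$ by replacing each edge $uv$ of $G$ by a copy of $K_{2,m}$, i.e. the edge $uv$ is deleted and $m$ new vertices are added, each adjacent to exactly $u$ and $v$. *)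

theory Defs
  imports Main "HOL-Library.Extended_Nat"
begin

definition simple_graph :: "'a set \<Rightarrow> ('a \<Rightarrow> 'a \<Rightarrow> bool) \<Rightarrow> bool" where
  "simple_graph V E \<longleftrightarrow> finite V \<and>
     (\<forall>u v. E u v \<longrightarrow> u \<in> V \<and> v \<in> V \<and> u \<noteq> v \<and> E v u)"

definition walk :: "'a set \<Rightarrow> ('a \<Rightarrow> 'a \<Rightarrow> bool) \<Rightarrow> 'a list \<Rightarrow> bool" where
  "walk V E xs \<longleftrightarrow> xs \<noteq> [] \<and> set xs \<subseteq> V \<and>
     (\<forall>i. Suc i < length xs \<longrightarrow> E (xs ! i) (xs ! Suc i))"

definition gdist :: "'a set \<Rightarrow> ('a \<Rightarrow> 'a \<Rightarrow> bool) \<Rightarrow> 'a \<Rightarrow> 'a \<Rightarrow> enat" where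
  "gdist V E u v = (INF xs \<in> {xs. walk V E xs \<and> hd xs = u \<and> last xs = v}. enat (length xs - 1))"

definition connected_graph :: "'a set \<Rightarrow> ('a \<Rightarrow> 'a \<Rightarrow> bool) \<Rightarrow> bool" where
  "connected_graph V E \<longleftrightarrow> (\<forall>u\<in>V. \<forall>v\<in>V. gdist V E u v \<noteq> \<infinity>)"

definition i_packing :: "'a set \<Rightarrow> ('a \<Rightarrow> 'a \<Rightarrow> bool) \<Rightarrow> nat \<Rightarrow> 'a set \<Rightarrow> bool" where
  "i_packing V E i S \<longleftrightarrow> S \<subseteq> V \<and>
     (\<forall>u\<in>S. \<forall>v\<in>S. u \<noteq> v \<longrightarrow> gdist V E u v > enat i)"

definition packing_coloring :: "'a set \<Rightarrow> ('a \<Rightarrow> 'a \<Rightarrow> bool) \<Rightarrow> nat \<Rightarrow> ('a \<Rightarrow> nat) \<Rightarrow> bool" where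
  "packing_coloring V E k c \<longleftrightarrow> (\<forall>v\<in>V. c v \<in> {1..k}) \<and>
     (\<forall>i\<in>{1..k}. i_packing V E i {v\<in>V. c v = i})"

definition packing_chromatic :: "'a set \<Rightarrow> ('a \<Rightarrow> 'a \<Rightarrow> bool) \<Rightarrow> nat" where
  "packing_chromatic V E = (LEAST k. \<exists>c. packing_coloring V E k c)"

definition clique_number :: "'a set \<Rightarrow> ('a \<Rightarrow> 'a \<Rightarrow> bool) \<Rightarrow> nat" where
  "clique_number V E = Max {card K | K. K \<subseteq> V \<and> (\<forall>u\<in>K. \<forall>v\<in>K. u \<noteq> v \<longrightarrow> E u v)}"

text \<open>Finite super subdivision: original vertices Inl v; for each edge {u,v} and
  each index i < m a new vertex Inr ({u,v}, i) adjacent exactly to u and v.\<close>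
definition fssd_V :: "'a set \<Rightarrow> ('a \<Rightarrow> 'a \<Rightarrow> bool) \<Rightarrow> nat \<Rightarrow> ('a + 'a set \<times> nat) set" where
  "fssd_V V E m = Inl ` V \<union> {Inr ({u, v}, i) | u v i. E u v \<and> i < m}"

definition fssd_E :: "('a \<Rightarrow> 'a \<Rightarrow> bool) \<Rightarrow> nat \<Rightarrow> ('a + 'a set \<times> nat) \<Rightarrow> ('a + 'a set \<times> nat) \<Rightarrow> bool" where
  "fssd_E E m x y \<longleftrightarrow> (\<exists>w a b i. E a b \<and> i < m \<and> w \<in> {a, b} \<and>
     ((x = Inl w \<and> y = Inr ({a, b}, i)) \<or> (x = Inr ({a, b}, i) \<and> y = Inl w)))"

end

theory Submission
  imports Defs
begin


definition dle :: "'b set \<Rightarrow> ('b \<Rightarrow> 'b \<Rightarrow> bool) \<Rightarrow> nat \<Rightarrow> 'b \<Rightarrow> 'b \<Rightarrow> bool" where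
  "dle W R n x y \<longleftrightarrow> (\<exists>xs. walk W R xs \<and> hd xs = x \<and> last xs = y \<and> length xs \<le> Suc n)"

lemma walk_single[simp]: "walk W R [x] \<longleftrightarrow> x \<in> W"
  unfolding walk_def by auto

lemma walk_Cons2[simp]: "walk W R (x # y # xs) \<longleftrightarrow> x \<in> W \<and> R x y \<and> walk W R (y # xs)"
proof
  assume h: "walk W R (x # y # xs)"
  have hw: "\<And>i. Suc i < length (x # y # xs) \<Longrightarrow> R ((x # y # xs) ! i) ((x # y # xs) ! Suc i)"
    using h unfolding walk_def by blast
  have 1: "R x y" using hw[of 0] by simp
  have 2: "\<forall>i. Suc i < length (y # xs) \<longrightarrow> R ((y # xs) ! i) ((y # xs) ! Suc i)"
  proof (intro allI impI)
    fix i assume "Suc i < length (y # xs)"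
    then have "Suc (Suc i) < length (x # y # xs)" by simp
    from hw[OF this] show "R ((y # xs) ! i) ((y # xs) ! Suc i)" by simp
  qed
  have 3: "set (x # y # xs) \<subseteq> W" using h unfolding walk_def by blast
  show "x \<in> W \<and> R x y \<and> walk W R (y # xs)" using 1 2 3 unfolding walk_def by simp
next
  assume h: "x \<in> W \<and> R x y \<and> walk W R (y # xs)"
  have 2: "\<And>i. Suc i < length (y # xs) \<Longrightarrow> R ((y # xs) ! i) ((y # xs) ! Suc i)"
    using h unfolding walk_def by blast
  have 3: "set (y # xs) \<subseteq> W" using h unfolding walk_def by blast
  have 4: "\<forall>i. Suc i < length (x # y # xs) \<longrightarrow> R ((x # y # xs) ! i) ((x # y # xs) ! Suc i)"
  proof (intro allI impI)
    fix i assume i: "Suc i < length (x # y # xs)"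
    show "R ((x # y # xs) ! i) ((x # y # xs) ! Suc i)"
    proof (cases i)
      case 0 then show ?thesis using h by simp
    next
      case (Suc j) 
      then have "Suc j < length (y # xs)" using i by simp
      from 2[OF this] show ?thesis using Suc by simp
    qed
  qed
  show "walk W R (x # y # xs)" unfolding walk_def using 3 4 h by simp
qed
lemma gdist_le_iff: "gdist W R x y \<le> enat n \<longleftrightarrow> dle W R n x y"
proof
  assume h: "gdist W R x y \<le> enat n"
  let ?S = "{xs. walk W R xs \<and> hd xs = x \<and> last xs = y}"
  let ?f = "\<lambda>xs. enat (length xs - 1)"
  have ne: "?S \<noteq> {}"
  proof
    assume e: "?S = {}" have "gdist W R x y = \<infinity>" unfolding gdist_def by (simp only: e image_empty Inf_empty) (simp add: top_enat_def)
    with h show False by simp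
  qed
  have "gdist W R x y = (LEAST z. z \<in> ?f ` ?S)" unfolding gdist_def Inf_enat_def by (simp only: image_is_empty ne if_False)
  moreover have "(LEAST z. z \<in> ?f ` ?S) \<in> ?f ` ?S" using ne by (meson LeastI image_is_empty ex_in_conv)
  ultimately obtain xs where xs: "xs \<in> ?S" "gdist W R x y = ?f xs" by auto
  then have "xs \<noteq> []" unfolding walk_def by auto
  then show "dle W R n x y" unfolding dle_def using xs h by (intro exI[of _ xs]) auto
next
  assume "dle W R n x y"
  then obtain xs where xs: "walk W R xs" "hd xs = x" "last xs = y" "length xs \<le> Suc n" unfolding dle_def by auto
  show "gdist W R x y \<le> enat n" unfolding gdist_def
    by (rule INF_lower2[of xs]) (use xs in auto)
qed

lemma dle_mono: "dle W R n x y \<Longrightarrow> n \<le> n' \<Longrightarrow> dle W R n' x y"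
  unfolding dle_def by force

lemma dle1: "x \<in> W \<Longrightarrow> y \<in> W \<Longrightarrow> R x y \<Longrightarrow> 1 \<le> n \<Longrightarrow> dle W R n x y"
  unfolding dle_def by (intro exI[of _ "[x,y]"]) auto
lemma dle2: "x \<in> W \<Longrightarrow> y \<in> W \<Longrightarrow> z \<in> W \<Longrightarrow> R x z \<Longrightarrow> R z y \<Longrightarrow> 2 \<le> n \<Longrightarrow> dle W R n x y"
  unfolding dle_def by (intro exI[of _ "[x,z,y]"]) auto
lemma dle3: "x \<in> W \<Longrightarrow> y \<in> W \<Longrightarrow> z \<in> W \<Longrightarrow> z' \<in> W \<Longrightarrow> R x z \<Longrightarrow> R z z' \<Longrightarrow> R z' y \<Longrightarrow> 3 \<le> n \<Longrightarrow> dle W R n x y"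
  unfolding dle_def by (intro exI[of _ "[x,z,z',y]"]) auto
lemma dle4: "x \<in> W \<Longrightarrow> y \<in> W \<Longrightarrow> z \<in> W \<Longrightarrow> z' \<in> W \<Longrightarrow> z'' \<in> W \<Longrightarrow> R x z \<Longrightarrow> R z z' \<Longrightarrow> R z' z'' \<Longrightarrow> R z'' y \<Longrightarrow> 4 \<le> n \<Longrightarrow> dle W R n x y"
  unfolding dle_def by (intro exI[of _ "[x,z,z',z'',y]"]) auto

lemma conflict:
  assumes "packing_coloring W R k c" "x \<in> W" "y \<in> W" "x \<noteq> y" "c x = c y"
    "dle W R (c x) x y \<or> dle W R (c x) y x"
  shows False
proof -
  have "c x \<in> {1..k}" using assms unfolding packing_coloring_def by auto
  then have "i_packing W R (c x) {v\<in>W. c v = c x}" using assms(1) unfolding packing_coloring_def by auto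
  then have "gdist W R x y > enat (c x)" "gdist W R y x > enat (c x)" using assms unfolding i_packing_def by auto
  then show False using assms(6) gdist_le_iff by (metis leD)
qed

lemma color_inj:
  assumes "packing_coloring W R k c" "S \<subseteq> W"
    "\<And>x y. x \<in> S \<Longrightarrow> y \<in> S \<Longrightarrow> x \<noteq> y \<Longrightarrow> c x = c y \<Longrightarrow> dle W R (c x) x y \<or> dle W R (c x) y x"
  shows "inj_on c S"
  using assms conflict[OF assms(1)] unfolding inj_on_def by blast

lemma color_bound:
  assumes "packing_coloring W R k c" "S \<subseteq> W" "finite S" "\<And>x. x \<in> S \<Longrightarrow> c x \<ge> t"
    "\<And>x y. x \<in> S \<Longrightarrow> y \<in> S \<Longrightarrow> x \<noteq> y \<Longrightarrow> c x = c y \<Longrightarrow> dle W R (c x) x y \<or> dle W R (c x) y x"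
  shows "card S \<le> Suc k - t"
proof -
  have "inj_on c S" using color_inj assms by blast
  then have "card S = card (c ` S)" by (simp add: card_image)
  also have "c ` S \<subseteq> {t..k}" using assms(1,2,4) unfolding packing_coloring_def by auto
  then have "card (c ` S) \<le> card {t..k}" by (intro card_mono) auto
  finally show ?thesis by simp
qed



lemma fssd_E_cases:
  assumes "fssd_E E m x y"
  obtains w a b i where "E a b" "i < m" "w \<in> {a,b}" "x = Inl w" "y = Inr ({a,b}, i)"
  | w a b i where "E a b" "i < m" "w \<in> {a,b}" "x = Inr ({a,b}, i)" "y = Inl w"
  using assms unfolding fssd_E_def by blast

lemma fssd_adj:
  assumes "E a b" "1 \<le> m"
  shows "fssd_E E m (Inl a) (Inr ({a,b},0))" "fssd_E E m (Inr ({a,b},0)) (Inl a)"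
        "fssd_E E m (Inl b) (Inr ({a,b},0))" "fssd_E E m (Inr ({a,b},0)) (Inl b)"
  using assms unfolding fssd_E_def by (fastforce+)

lemma fssd_V_Inl: "v \<in> V \<Longrightarrow> Inl v \<in> fssd_V V E m"
  unfolding fssd_V_def by auto

lemma fssd_V_Inl_iff: "Inl v \<in> fssd_V V E m \<longleftrightarrow> v \<in> V"
  unfolding fssd_V_def by auto

lemma fssd_V_Inr: "E a b \<Longrightarrow> 1 \<le> m \<Longrightarrow> Inr ({a,b},0) \<in> fssd_V V E m"
  unfolding fssd_V_def by auto

lemma project_walk:
  assumes sg: "simple_graph V E"
  shows "walk (fssd_V V E m) (fssd_E E m) xs \<Longrightarrow> hd xs = Inl u \<Longrightarrow> last xs = Inl v \<Longrightarrow>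
    \<exists>ys. walk V E ys \<and> hd ys = u \<and> last ys = v \<and> 2 * length ys \<le> length xs + 1"
proof (induction "length xs" arbitrary: xs u rule: less_induct)
  case less
  obtain rest where xs: "xs = Inl u # rest" using less.prems(1,2) unfolding walk_def
    by (cases xs) auto
  show ?case
  proof (cases rest)
    case Nil
    then have "u = v" "u \<in> V" using less.prems xs by (auto simp: fssd_V_Inl_iff)
    then show ?thesis using xs Nil by (intro exI[of _ "[u]"]) auto
  next
    case (Cons y rest2)
    show ?thesis
    proof (cases rest2)
      case Nil
      have "fssd_E E m (Inl u) y" using less.prems(1) xs Cons by simp
      then obtain e where "y = Inr e" by (rule fssd_E_cases) auto
      then show ?thesis using less.prems(3) xs Cons Nil by simp
    next
      case (Cons z rest3)
      have w1: "fssd_E E m (Inl u) y" "fssd_E E m y z" "walk (fssd_V V E m) (fssd_E E m) (z # rest3)"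
        "u \<in> V"
        using less.prems(1) xs \<open>rest = y # rest2\<close> Cons by (auto simp: fssd_V_Inl_iff)
      from w1(1) obtain a b i where ab: "E a b" "u \<in> {a,b}" "y = Inr ({a,b}, i)"
        by (rule fssd_E_cases) auto
      from w1(2) obtain w where zw: "z = Inl w" "w \<in> {a,b}"
        by (rule fssd_E_cases) (use ab in \<open>auto simp: doubleton_eq_iff\<close>)
      have uw: "u = w \<or> E u w" using ab zw sg unfolding simple_graph_def by auto
      have "length (z # rest3) < length xs" using xs \<open>rest = y # rest2\<close> Cons by simp
      moreover have "last (z # rest3) = Inl v" using less.prems(3) xs \<open>rest = y # rest2\<close> Cons by simp
      ultimately obtain ys where ys: "walk V E ys" "hd ys = w" "last ys = v" "2 * length ys \<le> length (z # rest3) + 1"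
        using less.hyps w1(3) zw by fastforce
      have len: "length xs = length (z # rest3) + 2" using xs \<open>rest = y # rest2\<close> Cons by simp
      show ?thesis
      proof (cases "u = w")
        case True then show ?thesis using ys len by (intro exI[of _ ys]) auto
      next
        case False
        then have "E u w" using uw by simp
        obtain ys' where ys': "ys = w # ys'" using ys(1,2) unfolding walk_def by (cases ys) auto
        have "walk V E (u # ys)" using ys ys' \<open>E u w\<close> w1(4) by simp
        then show ?thesis using ys len ys' by (intro exI[of _ "u # ys"]) auto
      qed
    qed
  qed
qed



lemma coloring_exists:
  assumes "finite V"
  shows "\<exists>k c. packing_coloring V E k c"
proof -
  obtain f :: "'a \<Rightarrow> nat" and n where f: "f ` V = {i. i < n}" "inj_on f V"
    using finite_imp_inj_to_nat_seg[OF assms] by metis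
  have "packing_coloring V E n (\<lambda>v. f v + 1)"
    unfolding packing_coloring_def i_packing_def
  proof (intro conjI ballI)
    fix v assume "v \<in> V" then have "f v \<in> f ` V" by (rule imageI)
    then have "f v < n" using f(1) by simp
    then show "f v + 1 \<in> {1..n}" by simp
  next
    fix i assume "i \<in> {1..n}"
    show "{v \<in> V. f v + 1 = i} \<subseteq> V" by blast
  next
    fix i u v assume uv: "u \<in> {v \<in> V. f v + 1 = i}" "v \<in> {v \<in> V. f v + 1 = i}"
    then have "f u = f v" by simp
    then have "u = v" using inj_onD[OF f(2)] uv by simp
    then show "u \<noteq> v \<longrightarrow> enat i < gdist V E u v" by simp
  qed
  then show ?thesis by blast
qed

lemma packing_chromatic_ex:
  assumes "finite V"
  shows "\<exists>c. packing_coloring V E (packing_chromatic V E) c"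
proof -
  obtain k c where "packing_coloring V E k c" using coloring_exists[OF assms, of E] by blast
  then show ?thesis unfolding packing_chromatic_def by (rule LeastI_ex[where P = "\<lambda>k. \<exists>c. packing_coloring V E k c", OF exI, OF exI])
qed

lemma packing_chromatic_le:
  "packing_coloring V E k c \<Longrightarrow> packing_chromatic V E \<le> k"
  unfolding packing_chromatic_def by (rule Least_le) blast

lemma packing_coloring_via_dle:
  assumes "\<And>v. v \<in> W \<Longrightarrow> c v \<in> {1..k}"
    "\<And>x y. x \<in> W \<Longrightarrow> y \<in> W \<Longrightarrow> x \<noteq> y \<Longrightarrow> c x = c y \<Longrightarrow> \<not> dle W R (c x) x y"
  shows "packing_coloring W R k c"
  unfolding packing_coloring_def i_packing_def
proof (intro conjI ballI)
  fix i assume "i \<in> {1..k}"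
  show "{v \<in> W. c v = i} \<subseteq> W" by auto
  fix u v assume "u \<in> {v \<in> W. c v = i}" "v \<in> {v \<in> W. c v = i}"
  then show "u \<noteq> v \<longrightarrow> enat i < gdist W R u v"
    using assms(2)[of u v] gdist_le_iff[of W R u v i] by (auto simp: not_le)
qed (use assms in auto)

lemma upper:
  assumes sg: "simple_graph V E" and m: "1 \<le> m" and pc: "packing_coloring V E k c"
  shows "packing_coloring (fssd_V V E m) (fssd_E E m) (k + 1) (case_sum (\<lambda>v. c v + 1) (\<lambda>_. 1))"
    (is "packing_coloring ?W ?R _ ?c")
proof (rule packing_coloring_via_dle)
  fix x assume "x \<in> ?W"
  then show "?c x \<in> {1..k+1}"
  proof (cases x)
    case (Inl u) then have "u \<in> V" using \<open>x \<in> ?W\<close> by (simp add: fssd_V_Inl_iff)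
    then show ?thesis using pc Inl unfolding packing_coloring_def by auto
  qed simp
next
  fix x y assume x: "x \<in> ?W" and y: "y \<in> ?W" and xy: "x \<noteq> y" and cxy: "?c x = ?c y"
  show "\<not> dle ?W ?R (?c x) x y"
  proof
    assume d: "dle ?W ?R (?c x) x y"
    then obtain xs where xs: "walk ?W ?R xs" "hd xs = x" "last xs = y" "length xs \<le> Suc (?c x)"
      unfolding dle_def by blast
    show False
    proof (cases x)
      case (Inl u)
      then have "u \<in> V" using x by (simp add: fssd_V_Inl_iff)
      then have "c u \<ge> 1" using pc unfolding packing_coloring_def by auto
      then obtain v where yv: "y = Inl v" using cxy Inl by (cases y) auto
      have uv: "u \<in> V" "v \<in> V" "u \<noteq> v" "c u = c v" using x y xy cxy Inl yv by (auto simp: fssd_V_Inl_iff)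
      have cu: "c u \<ge> 1" using pc uv unfolding packing_coloring_def by auto
      obtain ys where ys: "walk V E ys" "hd ys = u" "last ys = v" "2 * length ys \<le> length xs + 1"
        using project_walk[OF sg xs(1)] xs Inl yv by blast
      have "length ys \<le> Suc (c u)" using ys(4) xs(4) Inl cu by simp
      then have "dle V E (c u) u v" unfolding dle_def using ys by blast
      then show False using conflict[OF pc uv(1,2,3,4)] by blast
    next
      case (Inr e)
      have "\<And>a. y = Inl a \<Longrightarrow> False"
      proof -
        fix a assume ya: "y = Inl a"
        then have "a \<in> V" using y by (simp add: fssd_V_Inl_iff)
        then have "c a \<ge> 1" using pc unfolding packing_coloring_def by auto
        then show False using cxy Inr ya by simp
      qed
      then obtain e' where ye: "y = Inr e'" by (cases y) auto
      have "?c x = 1" using Inr by simp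
      then have "length xs \<le> 2" using xs(4) by simp
      moreover obtain a rest where ar: "xs = a # rest" using xs(1) unfolding walk_def by (cases xs) auto
      ultimately have lr: "length rest \<le> 1" by simp
      show False
      proof (cases rest)
        case Nil then show False using xs xy ar by simp
      next
        case (Cons b rest')
        then have "rest' = []" using lr by simp
        then have "?R x y" using xs ar Cons by simp
        from \<open>?R x y\<close> show False by (rule fssd_E_cases) (use Inr ye in simp_all)
      qed
    qed
  qed
qed



lemma conn_walk:
  assumes "connected_graph V E" "u \<in> V" "v \<in> V"
  shows "\<exists>xs. walk V E xs \<and> hd xs = u \<and> last xs = v"
proof -
  have "gdist V E u v \<noteq> \<infinity>" using assms unfolding connected_graph_def by blast
  then obtain n where "gdist V E u v = enat n" by (cases "gdist V E u v") auto
  then have "dle V E n u v" using gdist_le_iff[of V E u v n] by simp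
  then show ?thesis unfolding dle_def by blast
qed

lemma walk_step:
  assumes "walk V E xs" "Suc i < length xs"
  shows "E (xs ! i) (xs ! Suc i)"
  using assms unfolding walk_def by blast

lemma walk_set:
  assumes "walk V E xs" "i < length xs"
  shows "xs ! i \<in> V"
  using assms unfolding walk_def by (meson nth_mem subsetD)

lemma edge_exists:
  assumes "connected_graph V E" "u \<in> V" "v \<in> V" "u \<noteq> v"
  shows "\<exists>w. E u w"
proof -
  obtain xs where xs: "walk V E xs" "hd xs = u" "last xs = v" using conn_walk[OF assms(1-3)] by blast
  have ne: "xs \<noteq> []" using xs(1) unfolding walk_def by simp
  then obtain a rest where ar: "xs = a # rest" by (cases xs) simp_all
  have "rest \<noteq> []"
  proof
    assume "rest = []"
    then show False using xs(2,3) ar assms(4) by simp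
  qed
  then obtain b rest' where br: "rest = b # rest'" by (cases rest) simp_all
  have "E a b" using xs(1) ar br by simp
  moreover have "a = u" using xs(2) ar by simp
  ultimately show ?thesis by blast
qed

lemma three_elems:
  assumes "card V \<ge> 3"
  shows "\<exists>u v w. u \<in> V \<and> v \<in> V \<and> w \<in> V \<and> u \<noteq> v \<and> u \<noteq> w \<and> v \<noteq> w"
proof -
  obtain S where S: "S \<subseteq> V" "card S = 3" using obtain_subset_with_card_n[OF assms] by blast
  then obtain x y z where xyz: "S = {x,y,z}" "x \<noteq> y" "y \<noteq> z" "x \<noteq> z" unfolding card_3_iff by blast
  then have "x \<in> V" "y \<in> V" "z \<in> V" using S(1) by auto
  then show ?thesis using xyz(2-4) by (intro exI[of _ x] exI[of _ y] exI[of _ z]) simp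
qed

lemma path2_exists:
  assumes sg: "simple_graph V E" and c: "connected_graph V E" and "card V \<ge> 3"
  shows "\<exists>a b d. E a b \<and> E b d \<and> a \<noteq> d"
proof -
  obtain u v w where uvw: "u \<in> V" "v \<in> V" "w \<in> V" "u \<noteq> v" "u \<noteq> w" "v \<noteq> w"
    using three_elems assms(3) by blast
  obtain a where ua: "E u a" using edge_exists[OF c uvw(1,2,4)] by blast
  have a: "a \<in> V" "a \<noteq> u" using ua sg unfolding simple_graph_def by auto
  have "\<exists>z\<in>{v,w}. z \<noteq> a" using uvw(6) by (cases "v = a") auto
  then obtain z where z: "z \<in> V" "z \<noteq> u" "z \<noteq> a" using uvw by blast
  obtain ys where ys: "walk V E ys" "hd ys = u" "last ys = z" using conn_walk[OF c uvw(1) z(1)] by blast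
  have ne: "ys \<noteq> []" using ys unfolding walk_def by simp
  define P where "P i \<longleftrightarrow> i < length ys \<and> ys ! i \<notin> {u, a}" for i
  have "P (length ys - 1)" using ys z ne unfolding P_def by (simp add: last_conv_nth)
  then have Pl: "P (LEAST i. P i)" by (rule LeastI)
  define i where "i = (LEAST i. P i)"
  have "i \<noteq> 0"
  proof
    assume "i = 0" then have "P 0" using Pl i_def by simp
    moreover have "ys ! 0 = u" using ys(2) ne by (simp add: hd_conv_nth)
    ultimately show False unfolding P_def by simp
  qed
  then obtain j where ij: "i = Suc j" by (cases i) auto
  have "j < i" using ij by simp
  then have "\<not> P j" unfolding i_def by (rule not_less_Least)
  then have yj: "ys ! j \<in> {u, a}" using Pl ij unfolding i_def P_def by simp
  have yi: "ys ! Suc j \<notin> {u, a}" "Suc j < length ys" using Pl ij unfolding i_def P_def by auto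
  have e: "E (ys ! j) (ys ! Suc j)" using walk_step[OF ys(1) yi(2)] .
  show ?thesis
  proof (cases "ys ! j = u")
    case True
    have "E a u" using ua sg unfolding simple_graph_def by blast
    then show ?thesis using e True yi by blast
  next
    case False
    then have "ys ! j = a" using yj by simp
    then show ?thesis using e ua yi by blast
  qed
qed

lemma clique_obtain:
  assumes sg: "simple_graph V E" and ab: "E a b"
  obtains K where "K \<subseteq> V" "\<forall>u\<in>K. \<forall>v\<in>K. u \<noteq> v \<longrightarrow> E u v" "card K = clique_number V E"
    "clique_number V E \<ge> 2" "finite K"
proof -
  define Q where "Q K \<longleftrightarrow> K \<subseteq> V \<and> (\<forall>u\<in>K. \<forall>v\<in>K. u \<noteq> v \<longrightarrow> E u v)" for K
  define C where "C = {card K | K. Q K}"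
  have cn: "clique_number V E = Max C" unfolding clique_number_def C_def Q_def by simp
  have fV: "finite V" using sg unfolding simple_graph_def by blast
  have "C \<subseteq> {0..card V}"
  proof
    fix x assume "x \<in> C"
    then obtain K where "x = card K" "K \<subseteq> V" unfolding C_def Q_def by blast
    then show "x \<in> {0..card V}" using card_mono[OF fV] by simp
  qed
  then have fin: "finite C" by (rule finite_subset) simp
  have abV: "a \<in> V" "b \<in> V" "a \<noteq> b" "E b a" using ab sg unfolding simple_graph_def by auto
  have "Q {a,b}" unfolding Q_def using abV ab by auto
  then have abC: "card {a, b} \<in> C" unfolding C_def by blast
  have "card {a, b} = 2" using abV(3) by simp
  then have two: "2 \<le> Max C" using Max_ge[OF fin abC] by simp
  have "C \<noteq> {}" using abC by blast
  then have "Max C \<in> C" using fin by (rule Max_in[rotated])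
  moreover have "\<And>x. x \<in> C \<Longrightarrow> \<exists>K. x = card K \<and> Q K" unfolding C_def by blast
  ultimately obtain K where K: "Q K" "card K = Max C" by metis
  have "finite K" using K(1) fV unfolding Q_def by (metis finite_subset)
  show ?thesis
    by (rule that) (use K \<open>finite K\<close> two cn in \<open>simp_all add: Q_def\<close>)
qed



lemma lower:
  assumes sg: "simple_graph V E" and cg: "connected_graph V E" and c3: "card V \<ge> 3"
    and m: "1 \<le> m" and pc: "packing_coloring (fssd_V V E m) (fssd_E E m) k c"
  shows "clique_number V E + 1 \<le> k"
proof -
  define F where "F = fssd_V V E m"
  define R where "R = fssd_E E m"
  define s :: "'a \<Rightarrow> 'a \<Rightarrow> 'a + 'a set \<times> nat" where "s x y = Inr ({x,y},0)" for x y
  have pc': "packing_coloring F R k c" using pc unfolding F_def R_def .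
  have Esym: "E y x" if "E x y" for x y using that sg unfolding simple_graph_def by blast
  have Ene: "x \<noteq> y" "x \<in> V" "y \<in> V" if "E x y" for x y using that sg unfolding simple_graph_def by blast+
  have sF: "s x y \<in> F" if "E x y" for x y unfolding s_def F_def using fssd_V_Inr[of E x y m V, OF that m] .
  have lF: "Inl x \<in> F" if "x \<in> V" for x unfolding F_def using fssd_V_Inl[OF that] .
  have Rsw: "R (s u v) (Inl w)" "R (Inl w) (s u v)" if "E u v" "w \<in> {u,v}" for u v w
  proof -
    have "w = u \<or> w = v" using that(2) by simp
    then show "R (s u v) (Inl w)" "R (Inl w) (s u v)"
      unfolding R_def s_def using fssd_adj[of E u v m, OF that(1) m] by auto
  qed
  have ls_ne[simp]: "Inl x \<noteq> s u v" "s u v \<noteq> Inl x" for x u v unfolding s_def by auto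
  have s_comm: "s x y = s y x" for x y unfolding s_def by (simp add: insert_commute)
  have s_eq: "s x y = s x' y' \<longleftrightarrow> {x,y} = {x',y'}" for x y x' y' unfolding s_def by simp
  have col: "1 \<le> c z" "c z \<le> k" if "z \<in> F" for z using pc' that unfolding packing_coloring_def by auto
  have conf: "False" if "x \<in> F" "y \<in> F" "x \<noteq> y" "c x = c y" "dle F R (c x) x y" for x y
    using conflict[OF pc' that(1-4)] that(5) by blast
  have d1: "dle F R n (Inl w) (s u v)" "dle F R n (s u v) (Inl w)"
    if "E u v" "w \<in> {u,v}" "1 \<le> n" for u v w n
  proof -
    have "w \<in> V" using that(2) Ene[OF that(1)] by auto
    then have a: "Inl w \<in> F" by (rule lF)
    have b: "s u v \<in> F" using sF[OF that(1)] .
    have r1: "R (Inl w) (s u v)" "R (s u v) (Inl w)" using Rsw[OF that(1,2)] by auto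
    show "dle F R n (Inl w) (s u v)" "dle F R n (s u v) (Inl w)"
      using dle1[where R=R, OF a b r1(1) that(3)] dle1[where R=R, OF b a r1(2) that(3)] by auto
  qed
  have d2s: "dle F R n (s u v) (s u' v')"
    if "E u v" "E u' v'" "w \<in> {u,v}" "w \<in> {u',v'}" "2 \<le> n" for u v u' v' w n
  proof -
    have "w \<in> V" using that(3) Ene[OF that(1)] by auto
    then have a: "Inl w \<in> F" by (rule lF)
    have b: "s u v \<in> F" "s u' v' \<in> F" using sF[OF that(1)] sF[OF that(2)] by auto
    have r: "R (s u v) (Inl w)" "R (Inl w) (s u' v')" using Rsw(1)[OF that(1,3)] Rsw(2)[OF that(2,4)] by auto
    show ?thesis using dle2[where R=R, OF b(1) b(2) a r(1) r(2) that(5)] .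
  qed
  have d2l: "dle F R n (Inl u) (Inl v)" if "E u v" "2 \<le> n" for u v n
  proof -
    have "u \<in> V" "v \<in> V" using Ene[OF that(1)] by auto
    then have a: "Inl u \<in> F" "Inl v \<in> F" using lF by auto
    have b: "s u v \<in> F" using sF[OF that(1)] .
    have r: "R (Inl u) (s u v)" "R (s u v) (Inl v)" using Rsw(2)[OF that(1), of u] Rsw(1)[OF that(1), of v] by auto
    show ?thesis using dle2[where R=R, OF a(1) a(2) b r(1) r(2) that(2)] .
  qed
  have k3: "k \<ge> 3"
  proof (rule ccontr)
    assume "\<not> k \<ge> 3" then have k2: "k \<le> 2" by simp
    obtain a b d where abd: "E a b" "E b d" "a \<noteq> d" using path2_exists[OF sg cg c3] by blast
    have ab: "E a b" "a \<noteq> b" "a \<in> V" "b \<in> V" "d \<in> V" using abd Ene by auto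
    have bd: "E b d" using abd by simp
    have sd: "s a b \<noteq> s b d" using abd ab unfolding s_eq by (auto simp: doubleton_eq_iff)
    have lb: "Inl b \<in> F" using lF ab by simp
    have la: "Inl a \<in> F" using lF ab by simp
    have sab: "s a b \<in> F" using sF ab by simp
    have sbd: "s b d \<in> F" using sF bd by simp
    have cb: "c (Inl b) = 1 \<or> c (Inl b) = 2" using col[OF lb] k2 by linarith
    then show False
    proof
      assume cb1: "c (Inl b) = 1"
      have "c (s a b) \<noteq> 1"
        using conf[OF lb sab _ _ d1(1)[OF ab(1), of b]] cb1 by auto
      then have c1: "c (s a b) = 2" using col[OF sab] k2 by linarith
      have "c (s b d) \<noteq> 1"
        using conf[OF lb sbd _ _ d1(1)[OF bd, of b]] cb1 by auto
      then have c2: "c (s b d) = 2" using col[OF sbd] k2 by linarith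
      show False using conf[OF sab sbd sd _ d2s[OF ab(1) bd, of b]] c1 c2 by simp
    next
      assume cb2: "c (Inl b) = 2"
      have "c (s a b) \<noteq> 2"
        using conf[OF lb sab _ _ d1(1)[OF ab(1), of b]] cb2 by auto
      then have c1: "c (s a b) = 1" using col[OF sab] k2 by linarith
      have "c (Inl a) \<noteq> 2"
        using conf[OF la lb _ _ d2l[OF ab(1)]] cb2 ab(2) by auto
      then have c2: "c (Inl a) = 1" using col[OF la] k2 by linarith
      show False using conf[OF la sab _ _ d1(1)[OF ab(1), of a]] c1 c2 by auto
    qed
  qed
  obtain a0 b0 d0 where "E a0 b0" using path2_exists[OF sg cg c3] by blast
  then obtain K where K: "K \<subseteq> V" "\<forall>u\<in>K. \<forall>v\<in>K. u \<noteq> v \<longrightarrow> E u v" "card K = clique_number V E"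
    "clique_number V E \<ge> 2" "finite K"
    using clique_obtain[OF sg] by metis
  define w where "w = clique_number V E"
  have KE: "E x y" if "x \<in> K" "y \<in> K" "x \<noteq> y" for x y using K(2) that by blast
  have KV: "x \<in> V" if "x \<in> K" for x using K(1) that by blast
  show ?thesis
  proof (cases "w = 2")
    case True then show ?thesis using k3 unfolding w_def by simp
  next
    case False
    then have w3: "w \<ge> 3" using K(4) unfolding w_def by simp
    show ?thesis
    proof (rule ccontr)
      assume "\<not> ?thesis" then have kw: "k \<le> w" unfolding w_def by simp
      define star where "star x = s x ` (K - {x})" for x
      have star_card: "card (star x) = w - 1" if "x \<in> K" for x
      proof -
        have "inj_on (s x) (K - {x})"
        proof (rule inj_onI)
          fix y y' assume "y \<in> K - {x}" "y' \<in> K - {x}" "s x y = s x y'"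
          then show "y = y'" unfolding s_eq by (auto simp: doubleton_eq_iff)
        qed
        then have "card (star x) = card (K - {x})" unfolding star_def by (rule card_image)
        also have "\<dots> = w - 1" using that K(3,5) unfolding w_def by simp
        finally show ?thesis .
      qed
      have star_fin: "finite (star x)" for x unfolding star_def using K(5) by simp
      have star_F: "star x \<subseteq> F" if "x \<in> K" for x
      proof
        fix z assume "z \<in> star x"
        then obtain y where "y \<in> K - {x}" "z = s x y" unfolding star_def by blast
        then show "z \<in> F" using sF KE that by auto
      qed
      have star_pairs: "dle F R n y z" if "y \<in> star x" "z \<in> star x" "x \<in> K" "2 \<le> n" for x y z n
      proof -
        obtain u where u: "u \<in> K - {x}" "y = s x u" using \<open>y \<in> star x\<close> unfolding star_def by blast
        obtain v where v: "v \<in> K - {x}" "z = s x v" using \<open>z \<in> star x\<close> unfolding star_def by blast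
        have "E x u" "E x v" using KE u v that(3) by auto
        then show ?thesis using d2s[of x u x v x n] u v that(4) by simp
      qed
      have nz: "c (s x y) \<noteq> c (Inl x)" if "x \<in> K" "y \<in> K" "x \<noteq> y" for x y
      proof
        assume h: "c (s x y) = c (Inl x)"
        have e: "E x y" using KE that by simp
        have "1 \<le> c (Inl x)" using col lF KV that(1) by blast
        then have "dle F R (c (Inl x)) (Inl x) (s x y)" using d1(1)[OF e, of x] by simp
        then show False using conf[of "Inl x" "s x y"] lF KV sF e that h by simp
      qed
      define LK where "LK = (Inl :: 'a \<Rightarrow> 'a + 'a set \<times> nat) ` K"
      have "\<exists>a\<in>K. c (Inl a) = 1"
      proof (rule ccontr)
        assume "\<not> ?thesis"
        then have ge: "c x \<ge> 2" if "x \<in> LK" for x using that col lF KV unfolding LK_def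
          by (metis (no_types, lifting) Suc_1 image_iff not_less_eq_eq le_antisym)
        have "card (LK) \<le> Suc k - 2"
        proof (rule color_bound[OF pc'])
          show "LK \<subseteq> F" using lF KV unfolding LK_def by blast
          show "finite (LK)" using K(5) unfolding LK_def by simp
          show "2 \<le> c x" if "x \<in> LK" for x using ge that .
          fix x y assume xy: "x \<in> LK" "y \<in> LK" "x \<noteq> y" "c x = c y"
          then obtain u v where "x = Inl u" "y = Inl v" "u \<in> K" "v \<in> K" "u \<noteq> v" unfolding LK_def by blast
          then show "dle F R (c x) x y \<or> dle F R (c x) y x" using d2l[of u v "c x"] KE ge xy(1) by simp
        qed
        moreover have "card (LK) = w" using K(3) unfolding w_def LK_def by (simp add: card_image)
        ultimately show False using kw w3 by simp
      qed
      then obtain a where a: "a \<in> K" "c (Inl a) = 1" by blast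
      have star_a: "c z \<ge> 2" if "z \<in> star a" for z
      proof -
        obtain y where y: "y \<in> K - {a}" "z = s a y" using \<open>z \<in> star a\<close> unfolding star_def by blast
        have "c z \<noteq> 1" using nz[of a y] a y by auto
        moreover have "c z \<ge> 1" using col star_F a that by blast
        ultimately show ?thesis by simp
      qed
      have le2: "c (Inl b) \<le> 2" if "b \<in> K" for b
      proof (rule ccontr)
        assume "\<not> ?thesis" then have cb: "c (Inl b) \<ge> 3" by simp
        have ba: "b \<noteq> a" using a cb by auto
        have nin: "Inl b \<notin> star a" unfolding star_def by auto
        let ?S = "insert (Inl b) (star a)"
        have "card ?S \<le> Suc k - 2"
        proof (rule color_bound[OF pc'])
          show "?S \<subseteq> F" using star_F a lF KV that by blast
          show "finite ?S" using star_fin by simp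
          show "2 \<le> c x" if "x \<in> ?S" for x using that star_a cb by auto
          fix x y assume xy: "x \<in> ?S" "y \<in> ?S" "x \<noteq> y" "c x = c y"
          have far: "dle F R n (Inl b) z" if "z \<in> star a" "3 \<le> n" for z n
          proof -
            obtain y where y: "y \<in> K - {a}" "z = s a y" using \<open>z \<in> star a\<close> unfolding star_def by blast
            have e1: "E a b" "E a y" using KE a y that ba \<open>b \<in> K\<close> by auto
            have m: "Inl b \<in> F" "Inl a \<in> F" "s a b \<in> F" "s a y \<in> F" using lF KV sF e1 a \<open>b \<in> K\<close> by auto
            have r: "R (Inl b) (s a b)" "R (s a b) (Inl a)" "R (Inl a) (s a y)"
              using Rsw[OF e1(1)] Rsw[OF e1(2)] by auto
            show ?thesis using dle3[where R=R, OF m(1) m(4) m(3) m(2) r that(2)] y by simp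
          qed
          show "dle F R (c x) x y \<or> dle F R (c x) y x"
          proof (cases "x = Inl b")
            case True
            then have "y \<in> star a" using xy by auto
            then show ?thesis using far True cb by simp
          next
            case xF: False
            then have x': "x \<in> star a" using xy by auto
            show ?thesis
            proof (cases "y = Inl b")
              case True
              then show ?thesis using far[OF x'] cb xy(4) by simp
            next
              case False
              then have "y \<in> star a" using xy by auto
              then show ?thesis using star_pairs[OF x'] a star_a[OF x'] by simp
            qed
          qed
        qed
        moreover have "card ?S = w" using nin star_card[OF a(1)] star_fin w3 by simp
        ultimately show False using kw w3 by simp
      qed
      have all1: "c (Inl b) = 1" if "b \<in> K" for b
      proof (rule ccontr)
        assume "c (Inl b) \<noteq> 1"
        then have cb: "c (Inl b) = 2" using le2[OF that] col lF KV that by (metis le_antisym not_less_eq_eq Suc_1)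
        have oth: "c (Inl y) = 1" if "y \<in> K - {b}" for y
        proof (rule ccontr)
          assume "c (Inl y) \<noteq> 1"
          then have cy: "c (Inl y) = 2" using le2 col lF KV that by (metis DiffD1 le_antisym not_less_eq_eq Suc_1)
          have "E y b" using KE that \<open>b \<in> K\<close> by auto
          then have "dle F R (c (Inl y)) (Inl y) (Inl b)" using d2l cy by simp
          then show False using conf[of "Inl y" "Inl b"] lF KV that \<open>b \<in> K\<close> cy cb by auto
        qed
      have sb3: "3 \<le> c z" if "z \<in> star b" for z
      proof -
        obtain y where y: "y \<in> K - {b}" "z = s b y" using \<open>z \<in> star b\<close> unfolding star_def by blast
        have "c z \<noteq> 2" using nz[of b y] y that cb \<open>b \<in> K\<close> by auto
        moreover have "c z \<noteq> 1" using nz[of y b] y oth[OF y(1)] s_comm[of y b] \<open>b \<in> K\<close> by auto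
        moreover have "c z \<ge> 1" using col star_F \<open>b \<in> K\<close> \<open>z \<in> star b\<close> by blast
        ultimately show ?thesis by simp
      qed
        have "card (star b) \<le> Suc k - 3"
        proof (rule color_bound[OF pc'])
          show "star b \<subseteq> F" using star_F that .
          show "finite (star b)" using star_fin .
          show "3 \<le> c z" if "z \<in> star b" for z using sb3 that .
          fix x y assume xy: "x \<in> star b" "y \<in> star b" "x \<noteq> y" "c x = c y"
          have "c x \<ge> 3" using sb3 xy(1) .
          then show "dle F R (c x) x y \<or> dle F R (c x) y x"
            using star_pairs[OF xy(1,2) \<open>b \<in> K\<close>] by simp
        qed
        then show False using star_card[OF that] kw w3 by simp
      qed
      have sge2: "c (s x y) \<ge> 2" if "x \<in> K" "y \<in> K" "x \<noteq> y" for x y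
      proof -
        have "c (s x y) \<noteq> 1" using nz[OF that] all1[OF that(1)] by simp
        moreover have "c (s x y) \<ge> 1" using col sF KE that by blast
        ultimately show ?thesis by simp
      qed
      have star2: "c y \<ge> 2" if "y \<in> star x" "x \<in> K" for x y
      proof -
        obtain u where "u \<in> K - {x}" "y = s x u" using \<open>y \<in> star x\<close> unfolding star_def by blast
        then show ?thesis using sge2[of x u] \<open>x \<in> K\<close> by auto
      qed
      have "card K \<ge> 3" using K(3) w3 unfolding w_def by simp
      then obtain a1 b1 d1 where t: "a1 \<in> K" "b1 \<in> K" "d1 \<in> K" "a1 \<noteq> b1" "a1 \<noteq> d1" "b1 \<noteq> d1"
        using three_elems[of K] by blast
      define T where "T = {s a1 b1, s a1 d1, s b1 d1}"
      have e: "E a1 b1" "E a1 d1" "E b1 d1" using KE t by auto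
      have p: "dle F R 2 (s a1 b1) (s a1 d1)" "dle F R 2 (s a1 b1) (s b1 d1)" "dle F R 2 (s a1 d1) (s b1 d1)"
        using d2s[where w=a1 and n=2, OF e(1) e(2)] d2s[where w=b1 and n=2, OF e(1) e(3)]
          d2s[where w=d1 and n=2, OF e(2) e(3)] by simp_all
      have ne: "s a1 b1 \<noteq> s a1 d1" "s a1 b1 \<noteq> s b1 d1" "s a1 d1 \<noteq> s b1 d1"
        using t unfolding s_eq by (auto simp: doubleton_eq_iff)
      have TF: "T \<subseteq> F" using sF[OF e(1)] sF[OF e(2)] sF[OF e(3)] unfolding T_def by simp
      have T2: "2 \<le> c x" if "x \<in> T" for x
      proof -
        have "x = s a1 b1 \<or> x = s a1 d1 \<or> x = s b1 d1" using that unfolding T_def by simp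
        then show ?thesis using sge2[OF t(1,2,4)] sge2[OF t(1,3,5)] sge2[OF t(2,3,6)] by (elim disjE) simp_all
      qed
      have "card T \<le> Suc k - 2"
      proof (rule color_bound[OF pc' TF])
        show "finite T" unfolding T_def by simp
        show "2 \<le> c x" if "x \<in> T" for x using T2 that .
        fix x y assume xy: "x \<in> T" "y \<in> T" "x \<noteq> y" "c x = c y"
        have xs: "x = s a1 b1 \<or> x = s a1 d1 \<or> x = s b1 d1" using xy(1) unfolding T_def by simp
        have ys: "y = s a1 b1 \<or> y = s a1 d1 \<or> y = s b1 d1" using xy(2) unfolding T_def by simp
        have "dle F R 2 x y \<or> dle F R 2 y x" using xs ys xy(3) p by (elim disjE) simp_all
        moreover have "2 \<le> c x" using T2[OF xy(1)] .
        ultimately show "dle F R (c x) x y \<or> dle F R (c x) y x"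
          using dle_mono[of F R 2 x y "c x"] dle_mono[of F R 2 y x "c x"] by blast
      qed
      moreover have "card T = 3" using ne unfolding T_def by simp
      ultimately have k4: "k \<ge> 4" by simp
      then have w4: "w \<ge> 4" using kw by simp
      have surj: "c ` star x = {2..k}" if "x \<in> K" for x
      proof -
        have "inj_on c (star x)"
        proof (rule color_inj[OF pc' star_F[OF that]])
          fix y z assume yz: "y \<in> star x" "z \<in> star x" "y \<noteq> z" "c y = c z"
          have "c y \<ge> 2" using star2 yz(1) that .
          then show "dle F R (c y) y z \<or> dle F R (c y) z y" using star_pairs[OF yz(1,2) that] by simp
        qed
        then have cc: "card (c ` star x) = w - 1" using star_card[OF that] by (simp add: card_image)
        have sub: "c ` star x \<subseteq> {2..k}"
        proof
          fix j assume "j \<in> c ` star x"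
          then obtain y where yj: "y \<in> star x" "j = c y" by blast
          have "c y \<ge> 2" using star2 yj(1) that .
          moreover have "c y \<le> k" using col star_F[OF that] yj(1) by blast
          ultimately show "j \<in> {2..k}" using yj by simp
        qed
        have "card (c ` star x) \<le> card {2..k}" using sub by (intro card_mono) auto
        moreover have "card {2..k} \<le> card (c ` star x)" using cc kw by simp
        ultimately have "card (c ` star x) = card {2..k}" by simp
        then show ?thesis using card_subset_eq[OF _ sub] by simp
      qed
      have "4 \<in> c ` star a" using surj[OF a(1)] k4 by simp
      then obtain z0 where z0': "4 = c z0" "z0 \<in> star a" by (rule imageE)
      then have z0: "z0 \<in> star a" "c z0 = 4" by simp_all
      then obtain y where "y \<in> K - {a}" "z0 = s a y" unfolding star_def by blast
      then have y: "y \<in> K - {a}" "c (s a y) = 4" using z0 by simp_all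
      have "\<not> K \<subseteq> {a, y}"
      proof
        assume "K \<subseteq> {a, y}"
        then have "card K \<le> card {a, y}" by (intro card_mono) auto
        also have "\<dots> \<le> 2" by (cases "a = y") auto
        finally show False using K(3) w4 unfolding w_def by simp
      qed
      then obtain z where z: "z \<in> K" "z \<noteq> a" "z \<noteq> y" by blast
      have "4 \<in> c ` star z" using surj[OF z(1)] k4 by simp
      then obtain z1 where z1': "4 = c z1" "z1 \<in> star z" by (rule imageE)
      then have z1: "z1 \<in> star z" "c z1 = 4" by simp_all
      then obtain v where "v \<in> K - {z}" "z1 = s z v" unfolding star_def by blast
      then have v: "v \<in> K - {z}" "c (s z v) = 4" using z1 by simp_all
      have neq: "s a y \<noteq> s z v" using z unfolding s_eq by (auto simp: doubleton_eq_iff)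
      have e1: "E a y" "E a z" "E z v" using KE a y z v by auto
      have mF: "s a y \<in> F" "Inl a \<in> F" "s a z \<in> F" "Inl z \<in> F" "s z v \<in> F"
        using sF[OF e1(1)] sF[OF e1(2)] sF[OF e1(3)] lF KV a z by auto
      have r: "R (s a y) (Inl a)" "R (Inl a) (s a z)" "R (s a z) (Inl z)" "R (Inl z) (s z v)"
        using Rsw[OF e1(1)] Rsw[OF e1(2)] Rsw[OF e1(3)] by auto
      have "dle F R 4 (s a y) (s z v)"
        using dle4[where R=R and n=4, OF mF(1) mF(5) mF(2) mF(3) mF(4) r] by simp
      then show False using conf[OF mF(1) mF(5) neq] y v by simp
    qed
  qed
qed


theorem proposition3:
  fixes V :: "'a set" and E :: "'a \<Rightarrow> 'a \<Rightarrow> bool" and m :: nat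
  assumes "simple_graph V E"
    and "connected_graph V E"
    and "card V \<ge> 3"
    and "m \<ge> 1"
  shows "clique_number V E + 1 \<le> packing_chromatic (fssd_V V E m) (fssd_E E m)
       \<and> packing_chromatic (fssd_V V E m) (fssd_E E m) \<le> packing_chromatic V E + 1"
proof -
  have fV: "finite V" using assms(1) unfolding simple_graph_def by blast
  obtain c0 where pc0: "packing_coloring V E (packing_chromatic V E) c0"
    using packing_chromatic_ex[OF fV] by blast
  have up: "packing_coloring (fssd_V V E m) (fssd_E E m) (packing_chromatic V E + 1)
      (case_sum (\<lambda>v. c0 v + 1) (\<lambda>_. 1))"
    by (rule upper[OF assms(1) assms(4) pc0])
  have ub: "packing_chromatic (fssd_V V E m) (fssd_E E m) \<le> packing_chromatic V E + 1"
    using packing_chromatic_le[OF up] .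
  have "\<exists>c. packing_coloring (fssd_V V E m) (fssd_E E m) (packing_chromatic (fssd_V V E m) (fssd_E E m)) c"
    unfolding packing_chromatic_def by (rule LeastI_ex) (rule exI[of _ "packing_chromatic V E + 1"], rule exI, rule up)
  then obtain c1 where "packing_coloring (fssd_V V E m) (fssd_E E m) (packing_chromatic (fssd_V V E m) (fssd_E E m)) c1"
    by blast
  from lower[OF assms(1) assms(2) assms(3) assms(4) this] ub show ?thesis by simp
qed

end
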